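(* Let $S$ be a hyperbolic Riemann surface with universal cover $\mathbb H^+$ and deck group action $\rho_{can}:\pi_1(S,x_0)\to PSL(2,\mathbb R)$, and let $T^1\mathcal F_{can}=(T^1\mathbb H^+\times\mathbb CP^1)/\pi_1(S,x_0)$ with action $\gamma\cdot(v,z)=(\rho_{can}(\gamma)_*v,\rho_{can}(\gamma)z)$. Let $X_{can}$ be the generator of the foliated geodesic flow on $T^1\mathcal F_{can}$ (induced by the vector field $(X,0)$ on $T^1\mathbb H^+\times\mathbb CP^1$, $X$ the geodesic flow generator of $T^1\mathbb H^+$), and $Y$ the vector field on $T^1\mathcal F_{can}$ induced by $\tilde Y$. Then $X_{can}$ and $Y$ commute. In particular the zero set of $Y$ is invariant by the flow of $X_{can}$, so that $\sigma^+(T^1S)$ and $\sigma^-(T^1S)$ are invariant by the foliated geodesic flow.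
   Context: Let $\iota:\mathbb H^+\to\mathbb CP^1$ be the inclusion. For $v\in T^1\mathbb H^+$ based at $p$, let $\tilde\sigma^+(v),\tilde\sigma^-(v)\in\mathbb RP^1=\partial\mathbb H^+$ be the forward and backward endpoints of the oriented geodesic tangent to $v$, and $Y_v$ the holomorphic vector field on $\mathbb CP^1$ vanishing at $\tilde\sigma^\pm(v)$ with $Y_v(\iota(p))=\iota_*(v)$; $\tilde Y(v,\cdot):=Y_v(\cdot)$ is a vertical vector field on $T^1\mathbb H^+\times\mathbb CP^1$, invariant under $PSL(2,\mathbb R)$, hence induces $Y$ on the quotient. $\sigma^\pm:T^1S\to T^1\mathcal F_{can}$ are the sections induced by $v\mapsto(v,\tilde\sigma^\pm(v))$; they form the zero set of $Y$. *)

theory Defs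
  imports "HOL-Analysis.Analysis"
begin

text \<open>
A unit tangent vector v of the hyperbolic plane H+ (metric |dz|^2/(Im z)^2)
is described by coordinates (x, y, th) with y > 0: its base point is p = x + i y and,
as a vector of C (i.e. iota_* v), it equals y e^(i th) (hyperbolic length 1).
The angle th ranges over R (a covering of the circle; everything is local).
\<close>

type_synonym t1h = "real \<times> real \<times> real"

definition T1H :: "t1h set" where
  "T1H = {(x, y, th). y > 0}"

definition base_pt :: "t1h \<Rightarrow> complex" where
  "base_pt v = (case v of (x, y, th) \<Rightarrow> Complex x y)"

definition vec_C :: "t1h \<Rightarrow> complex" where
  "vec_C v = (case v of (x, y, th) \<Rightarrow> complex_of_real y * cis th)"

text \<open>Generator X of the geodesic flow of T^1 H+ in these coordinates
(unit speed geodesic gamma: gamma' = y e^(i th), and th' = - cos th).\<close>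

definition geod_gen :: "t1h \<Rightarrow> t1h" where
  "geod_gen v = (case v of (x, y, th) \<Rightarrow> (y * cos th, y * sin th, - cos th))"

text \<open>Points of RP^1 = boundary of H+: Some a for a real, None for infinity.\<close>

text \<open>Forward / backward endpoints of the oriented geodesic tangent to v.
For cos th \<noteq> 0 the geodesic is the half circle with centre x + y tan th and
radius y / |cos th|; for cos th = 0 it is the vertical line Re z = x.\<close>

definition sig_plus :: "t1h \<Rightarrow> real option" where
  "sig_plus v = (case v of (x, y, th) \<Rightarrow>
     if cos th = 0 then (if sin th > 0 then None else Some x)
     else Some (x + y * (1 + sin th) / cos th))"

definition sig_minus :: "t1h \<Rightarrow> real option" where
  "sig_minus v = (case v of (x, y, th) \<Rightarrow>
     if cos th = 0 then (if sin th > 0 then Some x else None)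
     else Some (x + y * (sin th - 1) / cos th))"

text \<open>Holomorphic vector fields on CP^1, written in the affine chart C as
z \<mapsto> A + B z + C z^2 (coefficient triple (A,B,C)).  Such a field vanishes at
infinity iff C = 0 (in the chart w = 1/z it reads -(A w^2 + B w + C) d/dw).\<close>

type_synonym holvf = "complex \<times> complex \<times> complex"

definition holvf_eval :: "holvf \<Rightarrow> complex \<Rightarrow> complex" where
  "holvf_eval q z = (case q of (A, B, C) \<Rightarrow> A + B * z + C * z^2)"

definition holvf_vanishes_at :: "holvf \<Rightarrow> real option \<Rightarrow> bool" where
  "holvf_vanishes_at q e = (case e of
      None \<Rightarrow> snd (snd q) = 0
    | Some a \<Rightarrow> holvf_eval q (complex_of_real a) = 0)"

definition Y_field :: "t1h \<Rightarrow> holvf" where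
  "Y_field v = (THE q. holvf_vanishes_at q (sig_plus v) \<and> holvf_vanishes_at q (sig_minus v)
                       \<and> holvf_eval q (base_pt v) = vec_C v)"

type_synonym st = "real \<times> real \<times> real \<times> complex"

definition T1H_CP1 :: "st set" where
  "T1H_CP1 = {(x, y, th, z). y > 0}"

definition X_tilde :: "st \<Rightarrow> st" where
  "X_tilde u = (case u of (x, y, th, z) \<Rightarrow>
     (case geod_gen (x, y, th) of (a, b, c) \<Rightarrow> (a, b, c, 0)))"

definition Y_tilde :: "st \<Rightarrow> st" where
  "Y_tilde u = (case u of (x, y, th, z) \<Rightarrow> (0, 0, 0, holvf_eval (Y_field (x, y, th)) z))"

definition lie_bracket :: "('a::real_normed_vector \<Rightarrow> 'a) \<Rightarrow> ('a \<Rightarrow> 'a) \<Rightarrow> 'a \<Rightarrow> 'a" where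
  "lie_bracket A B u = frechet_derivative B (at u) (A u) - frechet_derivative A (at u) (B u)"

end

theory Submission
  imports Defs
begin

definition KA :: "t1h \<Rightarrow> real" where
  "KA v = - cos (snd (snd v)) * (fst v)^2 / (2 * fst (snd v)) - sin (snd (snd v)) * fst v + cos (snd (snd v)) * fst (snd v) / 2"
definition KB :: "t1h \<Rightarrow> real" where
  "KB v = sin (snd (snd v)) + cos (snd (snd v)) * fst v / fst (snd v)"
definition KC :: "t1h \<Rightarrow> real" where
  "KC v = - cos (snd (snd v)) / (2 * fst (snd v))"

lemma quad_zero:
  fixes A B C a b p :: complex
  assumes "A + B*a + C*a^2 = 0" "A + B*b + C*b^2 = 0" "A + B*p + C*p^2 = 0"
    "a \<noteq> b" "p \<noteq> a" "p \<noteq> b"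
  shows "A = 0 \<and> B = 0 \<and> C = 0"
proof -
  have "(a - b) * (B + C*(a+b)) = (A + B*a + C*a^2) - (A + B*b + C*b^2)"
    by (simp add: algebra_simps power2_eq_square)
  then have e1: "(a - b) * (B + C*(a+b)) = 0" using assms(1,2) by simp
  then have "B + C*(a+b) = 0" using assms(4) by simp
  then have hb: "B = - C*(a+b)" by (simp add: eq_neg_iff_add_eq_0)
  have "A = (A + B*a + C*a^2) + C*a*b" unfolding hb by (simp add: algebra_simps power2_eq_square)
  then have ha: "A = C*a*b" using assms(1) by simp
  have "C * ((p-a)*(p-b)) = 0" using assms(3) unfolding ha hb by (simp add: algebra_simps power2_eq_square)
  then have "C = 0" using assms(5,6) by simp
  then show ?thesis using ha hb by simp
qed

lemma eval_base:
  assumes "y > 0"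
  shows "holvf_eval (complex_of_real (KA (x,y,th)), complex_of_real (KB (x,y,th)), complex_of_real (KC (x,y,th))) (base_pt (x,y,th)) = vec_C (x,y,th)"
proof -
  have s: "(sin th)^2 + (cos th)^2 = 1" by simp
  show ?thesis using assms
  unfolding holvf_eval_def base_pt_def vec_C_def KA_def KB_def KC_def
  apply (simp add: complex_eq_iff power2_eq_square cis.sel)
  by (simp add: field_simps)
qed

lemma van_plus:
  assumes "y > 0"
  shows "holvf_vanishes_at (complex_of_real (KA (x,y,th)), complex_of_real (KB (x,y,th)), complex_of_real (KC (x,y,th))) (sig_plus (x,y,th))"
proof -
  have s: "(sin th)^2 + (cos th)^2 = 1" by simp
  show ?thesis
  proof (cases "cos th = 0")
    case True
    then have "sin th = 1 \<or> sin th = -1" using s by (simp add: power2_eq_1_iff)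
    then show ?thesis using True assms
      unfolding holvf_vanishes_at_def holvf_eval_def sig_plus_def KA_def KB_def KC_def
      by (auto simp: complex_eq_iff)
  next
    case False
    show ?thesis using False assms
      unfolding holvf_vanishes_at_def holvf_eval_def sig_plus_def KA_def KB_def KC_def
      apply (simp add: complex_eq_iff power2_eq_square)
      apply (simp add: field_simps)
      using s by algebra
  qed
qed

lemma van_minus:
  assumes "y > 0"
  shows "holvf_vanishes_at (complex_of_real (KA (x,y,th)), complex_of_real (KB (x,y,th)), complex_of_real (KC (x,y,th))) (sig_minus (x,y,th))"
proof -
  have s: "(sin th)^2 + (cos th)^2 = 1" by simp
  show ?thesis
  proof (cases "cos th = 0")
    case True
    then have "sin th = 1 \<or> sin th = -1" using s by (simp add: power2_eq_1_iff)
    then show ?thesis using True assms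
      unfolding holvf_vanishes_at_def holvf_eval_def sig_minus_def KA_def KB_def KC_def
      by (auto simp: complex_eq_iff)
  next
    case False
    show ?thesis using False assms
      unfolding holvf_vanishes_at_def holvf_eval_def sig_minus_def KA_def KB_def KC_def
      apply (simp add: complex_eq_iff power2_eq_square)
      apply (simp add: field_simps)
      using s by algebra
  qed
qed

lemma Yfield:
  assumes y: "y > 0"
  shows "Y_field (x,y,th) = (complex_of_real (KA (x,y,th)), complex_of_real (KB (x,y,th)), complex_of_real (KC (x,y,th)))"
  unfolding Y_field_def
proof (rule the_equality)
  let ?q0 = "(complex_of_real (KA (x,y,th)), complex_of_real (KB (x,y,th)), complex_of_real (KC (x,y,th)))"
  show "holvf_vanishes_at ?q0 (sig_plus (x, y, th)) \<and> holvf_vanishes_at ?q0 (sig_minus (x, y, th)) \<and>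
    holvf_eval ?q0 (base_pt (x, y, th)) = vec_C (x, y, th)"
    using van_plus[OF y] van_minus[OF y] eval_base[OF y] by blast
  fix q assume hq: "holvf_vanishes_at q (sig_plus (x, y, th)) \<and> holvf_vanishes_at q (sig_minus (x, y, th)) \<and>
    holvf_eval q (base_pt (x, y, th)) = vec_C (x, y, th)"
  obtain A B C where q: "q = (A,B,C)" by (cases q) auto
  define A0 where "A0 = complex_of_real (KA (x,y,th))"
  define B0 where "B0 = complex_of_real (KB (x,y,th))"
  define C0 where "C0 = complex_of_real (KC (x,y,th))"
  have h0: "holvf_vanishes_at (A0,B0,C0) (sig_plus (x, y, th)) \<and> holvf_vanishes_at (A0,B0,C0) (sig_minus (x, y, th)) \<and>
    holvf_eval (A0,B0,C0) (base_pt (x, y, th)) = vec_C (x, y, th)"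
    unfolding A0_def B0_def C0_def using van_plus[OF y] van_minus[OF y] eval_base[OF y] by blast
  have ev: "holvf_eval (A,B,C) z - holvf_eval (A0,B0,C0) z = (A-A0) + (B-B0)*z + (C-C0)*z^2" for z
    unfolding holvf_eval_def by (simp add: algebra_simps)
  have vp: "(A-A0) + (B-B0)*complex_of_real a + (C-C0)*(complex_of_real a)^2 = 0"
    if "holvf_vanishes_at (A,B,C) (Some a)" "holvf_vanishes_at (A0,B0,C0) (Some a)" for a
    using that ev[of "complex_of_real a"] unfolding holvf_vanishes_at_def by simp
  have pb: "(A-A0) + (B-B0)*Complex x y + (C-C0)*(Complex x y)^2 = 0"
    using hq h0 ev[of "Complex x y"] q unfolding base_pt_def by simp
  have ne: "Complex x y \<noteq> complex_of_real a" for a using y by (simp add: complex_eq_iff)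
  show "q = ?q0"
  proof (cases "cos th = 0")
    case False
    define ap where "ap = x + y * (1 + sin th) / cos th"
    define am where "am = x + y * (sin th - 1) / cos th"
    have sp: "sig_plus (x,y,th) = Some ap" "sig_minus (x,y,th) = Some am"
      using False unfolding sig_plus_def sig_minus_def ap_def am_def by auto
    have "ap \<noteq> am" using False y unfolding ap_def am_def by (simp add: field_simps)
    then have "complex_of_real ap \<noteq> complex_of_real am" by simp
    from quad_zero[OF vp[of ap] vp[of am] pb this ne ne] hq h0 q sp
    show ?thesis unfolding A0_def B0_def C0_def by simp
  next
    case True
    have s: "(sin th)^2 + (cos th)^2 = 1" by simp
    then have "sin th = 1 \<or> sin th = -1" using True by (simp add: power2_eq_1_iff)
    then have "(sig_plus (x,y,th) = None \<and> sig_minus (x,y,th) = Some x) \<or> (sig_plus (x,y,th) = Some x \<and> sig_minus (x,y,th) = None)"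
      using True unfolding sig_plus_def sig_minus_def by auto
    then have cz: "C = C0" and vx: "(A-A0) + (B-B0)*complex_of_real x + (C-C0)*(complex_of_real x)^2 = 0"
      using hq h0 q vp[of x] True unfolding holvf_vanishes_at_def C0_def KC_def by auto
    have "(B - B0) * (Complex x y - complex_of_real x) = ((A-A0) + (B-B0)*Complex x y + (C-C0)*(Complex x y)^2)
       - ((A-A0) + (B-B0)*complex_of_real x + (C-C0)*(complex_of_real x)^2)"
      using cz by (simp add: algebra_simps)
    then have "(B - B0) * (Complex x y - complex_of_real x) = 0"
      using pb vx by simp
    then have "B = B0" using ne[of x] by simp
    then have "A = A0" using vx cz by simp
    then show ?thesis using q cz \<open>B = B0\<close> unfolding A0_def B0_def C0_def by simp
  qed
qed

definition DKC :: "t1h \<Rightarrow> t1h \<Rightarrow> real" where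
  "DKC v h = cos (snd (snd v)) / (2 * (fst (snd v))^2) * fst (snd h) + sin (snd (snd v)) / (2 * fst (snd v)) * snd (snd h)"
definition DKB :: "t1h \<Rightarrow> t1h \<Rightarrow> real" where
  "DKB v h = cos (snd (snd v)) / fst (snd v) * fst h - cos (snd (snd v)) * fst v / (fst (snd v))^2 * fst (snd h)
     + (cos (snd (snd v)) - sin (snd (snd v)) * fst v / fst (snd v)) * snd (snd h)"
definition DKA :: "t1h \<Rightarrow> t1h \<Rightarrow> real" where
  "DKA v h = (- cos (snd (snd v)) * fst v / fst (snd v) - sin (snd (snd v))) * fst h
     + (cos (snd (snd v)) * (fst v)^2 / (2 * (fst (snd v))^2) + cos (snd (snd v)) / 2) * fst (snd h)
     + (sin (snd (snd v)) * (fst v)^2 / (2 * fst (snd v)) - cos (snd (snd v)) * fst v - sin (snd (snd v)) * fst (snd v) / 2) * snd (snd h)"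

lemma KC_deriv: "fst (snd v) \<noteq> 0 \<Longrightarrow> (KC has_derivative DKC v) (at v)"
  unfolding KC_def[abs_def] DKC_def[abs_def]
  apply (rule has_derivative_eq_rhs)
   apply (rule derivative_eq_intros refl | simp)+
  apply (rule ext)
  apply (simp add: field_simps power2_eq_square)
  done

lemma KB_deriv: "fst (snd v) \<noteq> 0 \<Longrightarrow> (KB has_derivative DKB v) (at v)"
  unfolding KB_def[abs_def] DKB_def[abs_def]
  apply (rule has_derivative_eq_rhs)
   apply (rule derivative_eq_intros refl | simp)+
  apply (rule ext)
  apply (simp add: field_simps power2_eq_square)
  done

lemma KA_deriv: "fst (snd v) \<noteq> 0 \<Longrightarrow> (KA has_derivative DKA v) (at v)"
  unfolding KA_def[abs_def] DKA_def[abs_def]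
  apply (rule has_derivative_eq_rhs)
   apply (rule derivative_eq_intros refl | simp)+
  apply (rule ext)
  apply (simp add: field_simps power2_eq_square)
  done

lemma DK_geod:
  assumes "fst (snd v) \<noteq> 0"
  shows "DKA v (geod_gen v) = 0" "DKB v (geod_gen v) = 0" "DKC v (geod_gen v) = 0"
  using assms unfolding DKA_def DKB_def DKC_def geod_gen_def
  by (auto simp: field_simps power2_eq_square split: prod.splits)

definition Eplus :: "real \<Rightarrow> real \<Rightarrow> real \<Rightarrow> real option" where
  "Eplus A B C = (if C = 0 then (if B > 0 then None else Some (- A / B)) else Some (- (B + 1) / (2 * C)))"
definition Eminus :: "real \<Rightarrow> real \<Rightarrow> real \<Rightarrow> real option" where
  "Eminus A B C = (if C = 0 then (if B > 0 then Some (- A / B) else None) else Some ((1 - B) / (2 * C)))"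

lemma sig_E:
  assumes "fst (snd v) \<noteq> 0"
  shows "sig_plus v = Eplus (KA v) (KB v) (KC v)" "sig_minus v = Eminus (KA v) (KB v) (KC v)"
proof -
  obtain x y th where v: "v = (x,y,th)" by (cases v) auto
  have y: "y \<noteq> 0" using assms v by simp
  have s: "(sin th)^2 + (cos th)^2 = 1" by simp
  have "sig_plus (x,y,th) = Eplus (KA (x,y,th)) (KB (x,y,th)) (KC (x,y,th)) \<and>
        sig_minus (x,y,th) = Eminus (KA (x,y,th)) (KB (x,y,th)) (KC (x,y,th))"
  proof (cases "cos th = 0")
    case True
    then have "sin th = 1 \<or> sin th = -1" using s by (simp add: power2_eq_1_iff)
    then show ?thesis using True y unfolding sig_plus_def sig_minus_def Eplus_def Eminus_def KA_def KB_def KC_def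
      by auto
  next
    case False
    then show ?thesis using y unfolding sig_plus_def sig_minus_def Eplus_def Eminus_def KA_def KB_def KC_def
      by (auto simp: field_simps)
  qed
  then show "sig_plus v = Eplus (KA v) (KB v) (KC v)" "sig_minus v = Eminus (KA v) (KB v) (KC v)"
    using v by auto
qed

lemma flow_part:
  fixes c :: "real \<Rightarrow> t1h"
  assumes c0: "c 0 \<in> T1H" and hc: "\<forall>t. (c has_vector_derivative geod_gen (c t)) (at t)"
  shows "sig_plus (c t) = sig_plus (c 0) \<and> sig_minus (c t) = sig_minus (c 0)"
proof -
  define Y where "Y t = fst (snd (c t))" for t
  define Th where "Th t = snd (snd (c t))" for t
  have hd: "(c has_derivative (\<lambda>h. h *\<^sub>R geod_gen (c t))) (at t)" for t
    using hc has_vector_derivative_def by blast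
  have gY: "fst (snd (geod_gen (c t))) = Y t * sin (Th t)" for t
    unfolding Y_def Th_def geod_gen_def by (auto split: prod.splits)
  have dY: "(Y has_real_derivative (Y t * sin (Th t))) (at t)" for t
  proof -
    have "((\<lambda>t. fst (snd (c t))) has_derivative (\<lambda>h. fst (snd (h *\<^sub>R geod_gen (c t))))) (at t)"
      by (rule has_derivative_fst has_derivative_snd hd)+
    moreover have "(\<lambda>h. fst (snd (h *\<^sub>R geod_gen (c t)))) = (*) (Y t * sin (Th t))"
      using gY[of t] by (auto simp: fun_eq_iff)
    ultimately show ?thesis unfolding has_field_derivative_def Y_def[abs_def] by simp
  qed
  have Y0: "Y 0 > 0" using c0 unfolding T1H_def Y_def by auto
  have Yne: "Y r \<noteq> 0" for r
  proof (cases "r \<ge> 0")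
    case True
    have "(\<lambda>t. (Y t)^2 * exp (2*t)) 0 \<le> (\<lambda>t. (Y t)^2 * exp (2*t)) r"
    proof (rule DERIV_nonneg_imp_nondecreasing[OF True])
      fix x
      have "((\<lambda>t. (Y t)^2 * exp (2*t)) has_real_derivative
          (2 * Y x * (Y x * sin (Th x)) * exp (2*x) + (Y x)^2 * (exp (2*x) * 2))) (at x)"
        by (rule derivative_eq_intros dY refl | simp)+
      moreover have "2 * Y x * (Y x * sin (Th x)) * exp (2*x) + (Y x)^2 * (exp (2*x) * 2)
           = 2 * (Y x)^2 * exp (2*x) * (1 + sin (Th x))"
        by (simp add: algebra_simps power2_eq_square)
      moreover have "0 \<le> 1 + sin (Th x)" using sin_ge_minus_one[of "Th x"] by linarith
      then have "0 \<le> 2 * (Y x)^2 * exp (2*x) * (1 + sin (Th x))"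
        by (intro mult_nonneg_nonneg) auto
      ultimately show "\<exists>y. ((\<lambda>t. (Y t)^2 * exp (2*t)) has_real_derivative y) (at x) \<and> 0 \<le> y"
        by auto
    qed
    moreover have "0 < (Y 0)^2" using Y0 by simp
    ultimately have "0 < (Y r)^2 * exp (2*r)" by (simp only: mult_zero_right minus_mult_commute exp_zero mult_1_right; linarith)
    then show ?thesis by auto
  next
    case False
    have "(\<lambda>t. (Y t)^2 * exp (-2*t)) r \<ge> (\<lambda>t. (Y t)^2 * exp (-2*t)) 0"
    proof (rule deriv_nonpos_imp_antimono[where g = "\<lambda>t. (Y t)^2 * exp (-2*t)" and a = r and b = 0 and g' = "\<lambda>x. 2 * Y x * (Y x * sin (Th x)) * exp (-2*x) + (Y x)^2 * (exp (-2*x) * (-2))"])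
      fix x
      show "((\<lambda>t. (Y t)^2 * exp (-2*t)) has_real_derivative
          (2 * Y x * (Y x * sin (Th x)) * exp (-2*x) + (Y x)^2 * (exp (-2*x) * (-2)))) (at x)"
        by (rule derivative_eq_intros dY refl | simp)+
    next
      fix x
      have "2 * Y x * (Y x * sin (Th x)) * exp (-2*x) + (Y x)^2 * (exp (-2*x) * (-2))
           = - (2 * (Y x)^2 * exp (-2*x) * (1 - sin (Th x)))"
        by (simp add: algebra_simps power2_eq_square)
      moreover have "0 \<le> 1 - sin (Th x)" using sin_le_one[of "Th x"] by linarith
      then have "0 \<le> 2 * (Y x)^2 * exp (-2*x) * (1 - sin (Th x))"
        by (intro mult_nonneg_nonneg) auto
      ultimately show "2 * Y x * (Y x * sin (Th x)) * exp (-2*x) + (Y x)^2 * (exp (-2*x) * (-2)) \<le> 0"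
        by linarith
    next
      show "r \<le> 0" using False by simp
    qed
    moreover have "0 < (Y 0)^2" using Y0 by simp
    ultimately have "0 < (Y r)^2 * exp (-2*r)" by (simp only: mult_zero_right minus_mult_commute exp_zero mult_1_right; linarith)
    then show ?thesis by auto
  qed
  have const: "K (c t) = K (c 0)" if KD: "\<And>v. fst (snd v) \<noteq> 0 \<Longrightarrow> (K has_derivative DK v) (at v)"
     and KG: "\<And>v. fst (snd v) \<noteq> 0 \<Longrightarrow> DK v (geod_gen v) = 0" for K :: "t1h \<Rightarrow> real" and DK
  proof -
    have "((\<lambda>t. K (c t)) has_real_derivative 0) (at s)" for s
    proof -
      have yn: "fst (snd (c s)) \<noteq> 0" using Yne[of s] unfolding Y_def .
      have "((K \<circ> c) has_derivative (DK (c s) \<circ> (\<lambda>h. h *\<^sub>R geod_gen (c s)))) (at s)"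
        by (rule diff_chain_at[OF hd KD[OF yn]])
      moreover have "linear (DK (c s))" using KD[OF yn] has_derivative_linear by blast
      then have "(DK (c s) \<circ> (\<lambda>h. h *\<^sub>R geod_gen (c s))) = (\<lambda>h. h * 0)"
        using KG[OF yn] by (auto simp: linear_scale)
      moreover have e0: "(*) (0::real) = (\<lambda>h. 0)" by auto
      ultimately show ?thesis unfolding has_field_derivative_def e0 by (simp add: o_def)
    qed
    then show ?thesis using DERIV_isconst_all by blast
  qed
  have a: "KA (c t) = KA (c 0)" by (rule const[OF KA_deriv DK_geod(1)])
  have b: "KB (c t) = KB (c 0)" by (rule const[OF KB_deriv DK_geod(2)])
  have cc: "KC (c t) = KC (c 0)" by (rule const[OF KC_deriv DK_geod(3)])
  have yt: "fst (snd (c t)) \<noteq> 0" using Yne[of t] unfolding Y_def .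
  have y0: "fst (snd (c 0)) \<noteq> 0" using Y0 unfolding Y_def by simp
  show ?thesis using sig_E[OF yt] sig_E[OF y0] a b cc by simp
qed

definition pr :: "st \<Rightarrow> t1h" where
  "pr u = (fst u, fst (snd u), fst (snd (snd u)))"

lemma pr_deriv: "(pr has_derivative pr) (at u)"
  unfolding pr_def[abs_def]
  by (rule derivative_eq_intros refl | simp)+

lemma Kpr:
  assumes "(K has_derivative DK (pr u)) (at (pr u))"
  shows "((\<lambda>u. K (pr u)) has_derivative (\<lambda>h. DK (pr u) (pr h))) (at u)"
  using diff_chain_at[OF pr_deriv assms] by (simp add: o_def)

definition Gf :: "st \<Rightarrow> st" where
  "Gf u = (0, 0, 0, complex_of_real (KA (pr u)) + complex_of_real (KB (pr u)) * snd (snd (snd u))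
      + complex_of_real (KC (pr u)) * (snd (snd (snd u)))^2)"

definition DG :: "st \<Rightarrow> st \<Rightarrow> st" where
  "DG u h = (0, 0, 0, complex_of_real (DKA (pr u) (pr h))
      + (complex_of_real (DKB (pr u) (pr h)) * snd (snd (snd u)) + complex_of_real (KB (pr u)) * snd (snd (snd h)))
      + (complex_of_real (DKC (pr u) (pr h)) * (snd (snd (snd u)))^2 + complex_of_real (KC (pr u)) * (2 * snd (snd (snd u)) * snd (snd (snd h)))))"

lemma Gf_deriv:
  assumes "fst (snd u) \<noteq> 0"
  shows "(Gf has_derivative DG u) (at u)"
proof -
  have y: "fst (snd (pr u)) \<noteq> 0" using assms by (simp add: pr_def)
  note hA = Kpr[of KA DKA u, OF KA_deriv[OF y]]
  note hB = Kpr[of KB DKB u, OF KB_deriv[OF y]]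
  note hC = Kpr[of KC DKC u, OF KC_deriv[OF y]]
  show ?thesis
    unfolding Gf_def[abs_def] DG_def[abs_def]
    apply (rule has_derivative_eq_rhs)
     apply (rule derivative_eq_intros hA hB hC refl | simp)+
    apply (auto simp: fun_eq_iff algebra_simps power2_eq_square)
    done
qed

definition DX :: "st \<Rightarrow> st \<Rightarrow> st" where
  "DX u h = (fst (snd h) * cos (fst (snd (snd u))) - fst (snd u) * sin (fst (snd (snd u))) * fst (snd (snd h)),
             fst (snd h) * sin (fst (snd (snd u))) + fst (snd u) * cos (fst (snd (snd u))) * fst (snd (snd h)),
             sin (fst (snd (snd u))) * fst (snd (snd h)), 0)"

lemma X_eq: "X_tilde = (\<lambda>u. (fst (snd u) * cos (fst (snd (snd u))), fst (snd u) * sin (fst (snd (snd u))),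
      - cos (fst (snd (snd u))), 0::complex))"
  by (auto simp: fun_eq_iff X_tilde_def geod_gen_def split: prod.splits)

lemma X_deriv: "(X_tilde has_derivative DX u) (at u)"
  unfolding X_eq DX_def[abs_def]
  apply (rule has_derivative_eq_rhs)
   apply (rule derivative_eq_intros refl | simp)+
  apply (auto simp: fun_eq_iff algebra_simps)
  done

lemma Y_deriv:
  assumes "u \<in> T1H_CP1"
  shows "(Y_tilde has_derivative DG u) (at u)"
proof (rule has_derivative_transform_within_open[where s = "{u. fst (snd u) > 0}"])
  have y: "fst (snd u) > 0" using assms by (auto simp: T1H_CP1_def)
  show "(Gf has_derivative DG u) (at u)" using Gf_deriv y by simp
  show "open {u :: st. fst (snd u) > 0}"
    by (intro open_Collect_less continuous_intros)
  show "u \<in> {u. fst (snd u) > 0}" using y by simp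
  fix w :: st assume "w \<in> {u. fst (snd u) > 0}"
  then obtain a b th z where w: "w = (a,b,th,z)" "b > 0" by (cases w) auto
  show "Gf w = Y_tilde w"
    using w Yfield[OF w(2), of a th] unfolding Gf_def Y_tilde_def holvf_eval_def pr_def by simp
qed

lemma part1:
  assumes "u \<in> T1H_CP1"
  shows "X_tilde differentiable (at u) \<and> Y_tilde differentiable (at u) \<and> lie_bracket X_tilde Y_tilde u = 0"
proof -
  have y: "fst (snd u) \<noteq> 0" using assms by (auto simp: T1H_CP1_def)
  have fX: "frechet_derivative X_tilde (at u) = DX u" using frechet_derivative_at[OF X_deriv] by simp
  have fY: "frechet_derivative Y_tilde (at u) = DG u" using frechet_derivative_at[OF Y_deriv[OF assms]] by simp
  have pX: "pr (X_tilde u) = geod_gen (pr u)"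
    by (auto simp: X_tilde_def pr_def geod_gen_def split: prod.splits)
  have zX: "snd (snd (snd (X_tilde u))) = 0"
    by (auto simp: X_tilde_def geod_gen_def split: prod.splits)
  have y': "fst (snd (pr u)) \<noteq> 0" using y by (simp add: pr_def)
  have "DG u (X_tilde u) = 0"
    unfolding DG_def pX zX using DK_geod[OF y'] by (simp add: zero_prod_def)
  moreover have "DX u (Y_tilde u) = 0"
    by (auto simp: DX_def Y_tilde_def zero_prod_def split: prod.splits)
  ultimately have "lie_bracket X_tilde Y_tilde u = 0"
    unfolding lie_bracket_def fX fY by simp
  then show ?thesis using X_deriv Y_deriv[OF assms] differentiable_def by blast
qed

theorem proposition7p6:
  shows "(\<forall>u \<in> T1H_CP1. X_tilde differentiable (at u) \<and> Y_tilde differentiable (at u)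
              \<and> lie_bracket X_tilde Y_tilde u = 0)
       \<and> (\<forall>c :: real \<Rightarrow> t1h. c 0 \<in> T1H \<and> (\<forall>t. (c has_vector_derivative geod_gen (c t)) (at t))
              \<longrightarrow> (\<forall>t. sig_plus (c t) = sig_plus (c 0) \<and> sig_minus (c t) = sig_minus (c 0)))"
  using part1 flow_part by blast

end
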